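(* Let $\mathbb{F}$ be a field of characteristic zero. Fix $K\in\mathbb{N}$ and $\mu\vdash 4K$. There exists an integer $M_K\geq 3K$ such that for every $N\geq M_K$, every standard tableau $T$ of shape $\mu^{(N-3K)}$ and every $O_1,\dots,O_l\in\Omega_{N,N+K}$ the following holds. Put $P_i:=\mathrm{Sub}^T_{(x,y)}(P_{O_i})$. If $f_1,\dots,f_r\in\mathrm{span}_{\mathbb{F}}\{P_1,\dots,P_l\}$ are linearly independent, written as $f_j=\sum_i\alpha_{ji}P_i$, then for all sufficiently large $s$ the map $(\cdot)^{(s)}:\mathrm{span}_{\mathbb{F}}\{f_1,\dots,f_r\}\to\mathbb{F}\langle Y\rangle$, $f_j\mapsto f_j^{(s)}:=\sum_i\alpha_{ji}P_i^{(s)}$ extended linearly, is injective (i.e. $f_1^{(s)},\dots,f_r^{(s)}$ are linearly independent).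
   Context: $\mathbb{F}\langle X\rangle$, $\mathbb{F}\langle Y\rangle$ are free non-unitary associative algebras on $X=\{x_1,x_2,\dots\}$ and $Y=\{y_1,y_2,\dots\}$. A standard tableau $T$ of shape $\nu\vdash m$ is the Young diagram of $\nu$ filled with $1,\dots,m$ increasing along rows and columns; $\mathrm{Sub}^T_{(x,y)}:\mathbb{F}\langle x_1,\dots,x_m\rangle\to\mathbb{F}\langle Y\rangle$ is the homomorphism $x_j\mapsto y_{i_j}$, where $i_j$ is the row of $T$ containing $j$. For $\nu=(\nu_1,\dots,\nu_r)$, $\nu^{(s)}=(\nu_1+s,\nu_2,\dots,\nu_r)$. $\Omega_{n,m}$ is the set of ordered partitions $O=\{A_1,\dots,A_n\}$ of $[m]$ into $n$ nonempty ordered lists (underlying sets disjoint with union $[m]$); for $A=[\![ab\cdots c]\!]$, $x_A=x_ax_b\cdots x_c$; $P_n(z_1,\dots,z_n):=\sum_{\sigma\in S_n}z_{\sigma(1)}\cdots z_{\sigma(n)}$ and $P_O:=P_n(x_{A_1},\dots,x_{A_n})$. Thus $\mathrm{Sub}^T_{(x,y)}(P_O)=P_n(m_1,\dots,m_n)$ with monomials $m_k=\mathrm{Sub}^T_{(x,y)}(x_{A_k})$, and for this $P=P_n(m_1,\dots,m_n)$ one sets $P^{(s)}:=P_{n+s}(m_1,\dots,m_n,y_1,\dots,y_1)$ ($s$ copies of $y_1$). *)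

theory Defs
  imports "HOL-Combinatorics.Permutations"
begin

text \<open>Elements of the free non-unitary algebra F<Y> are represented by their
coefficient functions on words; a word is a list of variable indices
(letter i stands for y_i, indices 1-based).\<close>

definition is_partition :: "nat list \<Rightarrow> nat \<Rightarrow> bool" where
  "is_partition \<nu> m \<longleftrightarrow> sorted_wrt (\<ge>) \<nu> \<and> (\<forall>x\<in>set \<nu>. 0 < x) \<and> sum_list \<nu> = m"

definition shape_shift :: "nat \<Rightarrow> nat list \<Rightarrow> nat list" where
  "shape_shift s \<nu> = (case \<nu> of [] \<Rightarrow> [s] | a # r \<Rightarrow> (a + s) # r)"

text \<open>A tableau is the list of its rows (row i+1 is T!i).\<close>
definition standard_tableau :: "nat list list \<Rightarrow> nat list \<Rightarrow> bool" where
  "standard_tableau T \<nu> \<longleftrightarrow>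
     map length T = \<nu> \<and> distinct (concat T) \<and> set (concat T) = {1..sum_list \<nu>} \<and>
     (\<forall>row\<in>set T. sorted_wrt (<) row) \<and>
     (\<forall>i j. Suc i < length T \<and> j < length (T ! Suc i) \<longrightarrow>
            j < length (T ! i) \<and> T ! i ! j < T ! Suc i ! j)"

definition tab_row :: "nat list list \<Rightarrow> nat \<Rightarrow> nat" where
  "tab_row T j = Suc (LEAST i. i < length T \<and> j \<in> set (T ! i))"

text \<open>Sub^T applied to the monomial x_A.\<close>
definition subw :: "nat list list \<Rightarrow> nat list \<Rightarrow> nat list" where
  "subw T A = map (tab_row T) A"

definition ordered_partitions :: "nat \<Rightarrow> nat \<Rightarrow> nat list list set" where
  "ordered_partitions n m = {Q. length Q = n \<and> (\<forall>A\<in>set Q. A \<noteq> []) \<and>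
       distinct (concat Q) \<and> set (concat Q) = {1..m}}"

definition Pn :: "nat list list \<Rightarrow> nat list \<Rightarrow> 'a::comm_ring_1" where
  "Pn ms w = (\<Sum>\<sigma> | \<sigma> permutes {..<length ms}.
      if concat (map (\<lambda>k. ms ! \<sigma> k) [0..<length ms]) = w then 1 else 0)"

definition lin_indep :: "nat \<Rightarrow> (nat \<Rightarrow> nat list \<Rightarrow> 'a::field) \<Rightarrow> bool" where
  "lin_indep r f \<longleftrightarrow>
     (\<forall>c. (\<lambda>w. \<Sum>j<r. c j * f j w) = (\<lambda>w. 0) \<longrightarrow> (\<forall>j<r. c j = 0))"

end

theory Submission
  imports Defs "HOL-Computational_Algebra.Polynomial"
begin

definition polyfam :: "(nat \<Rightarrow> nat list \<Rightarrow> 'a::field_char_0) \<Rightarrow> bool" where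
  "polyfam g \<longleftrightarrow> (\<forall>w. \<exists>p. \<forall>s. g s w = poly p (of_nat s))"

lemma polyfam_const: "polyfam (\<lambda>s w. h w)"
  unfolding polyfam_def by (metis poly_0 poly_pCons mult_zero_right add_0_right)

lemma polyfam_add: "polyfam g \<Longrightarrow> polyfam h \<Longrightarrow> polyfam (\<lambda>s w. g s w + h s w)"
  unfolding polyfam_def by (metis poly_add)

lemma polyfam_diff: "polyfam g \<Longrightarrow> polyfam h \<Longrightarrow> polyfam (\<lambda>s w. g s w - h s w)"
  unfolding polyfam_def by (metis poly_diff)

lemma polyfam_mult: "polyfam g \<Longrightarrow> polyfam h \<Longrightarrow> polyfam (\<lambda>s w. g s w * h s w)"
  unfolding polyfam_def by (metis poly_mult)

lemma polyfam_sum: "(\<And>i. i \<in> A \<Longrightarrow> polyfam (g i)) \<Longrightarrow> polyfam (\<lambda>s w. \<Sum>i\<in>A. g i s w)"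
proof (induction A rule: infinite_finite_induct)
  case (infinite A) then show ?case by (simp add: polyfam_const)
next
  case empty then show ?case by (simp add: polyfam_const)
next
  case (insert x F)
  then show ?case by (simp add: polyfam_add)
qed

lemma polyfam_choose: "polyfam (\<lambda>s w. (of_nat (s choose k) :: 'a::field_char_0))"
proof -
  let ?p = "smult (1 / fact k) (\<Prod>i=0..<k. [:- of_nat i, 1:]) :: 'a poly"
  have "of_nat (s choose k) = poly ?p (of_nat s)" for s
    by (simp add: binomial_gbinomial gbinomial_prod_rev poly_prod field_simps)
  then show ?thesis unfolding polyfam_def by blast
qed

lemma poly_eventually_nonzero:
  fixes p :: "'a::field_char_0 poly"
  assumes "poly p 0 \<noteq> 0"
  shows "\<exists>s0. \<forall>s\<ge>s0. poly p (of_nat s) \<noteq> 0"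
proof -
  have "p \<noteq> 0" using assms by auto
  then have fin: "finite {x. poly p x = 0}" by (rule poly_roots_finite)
  have "finite {s::nat. poly p (of_nat s) = 0}"
    using finite_vimageI[OF fin, of "of_nat :: nat \<Rightarrow> 'a"] inj_of_nat by (simp add: vimage_def)
  then obtain m where "\<forall>s\<in>{s::nat. poly p (of_nat s) = 0}. s \<le> m"
    using finite_nat_set_iff_bounded_le by blast
  then show ?thesis by (intro exI[of _ "Suc m"]) force
qed

lemma polyfam_indep:
  fixes G :: "nat \<Rightarrow> nat \<Rightarrow> nat list \<Rightarrow> 'a::field_char_0"
  assumes "\<And>j. j < r \<Longrightarrow> polyfam (G j)"
    and "lin_indep r (\<lambda>j. G j 0)"
  shows "\<exists>s0. \<forall>s\<ge>s0. lin_indep r (\<lambda>j. G j s)"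
  using assms
proof (induction r arbitrary: G)
  case 0
  then show ?case by (simp add: lin_indep_def)
next
  case (Suc r)
  have "G r 0 \<noteq> (\<lambda>w. 0)"
  proof
    assume z: "G r 0 = (\<lambda>w. 0)"
    have "(\<lambda>w. \<Sum>j<Suc r. (if j = r then 1 else 0) * G j 0 w) = (\<lambda>w. 0)"
      using z by (auto simp: fun_eq_iff)
    note X = this
    from Suc.prems(2) have Y: "\<And>c. (\<lambda>w. \<Sum>j<Suc r. c j * G j 0 w) = (\<lambda>w. 0) \<Longrightarrow> c r = 0"
      unfolding lin_indep_def by blast
    have "(\<lambda>j::nat. if j = r then (1::'a) else 0) r = 0" by (rule Y[OF X])
    then show False by simp
  qed
  then obtain w0 where w0: "G r 0 w0 \<noteq> 0" by auto
  define H where "H j s w = G r s w0 * G j s w - G j s w0 * G r s w" for j s w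
  have pH: "polyfam (H j)" if "j < r" for j
    unfolding H_def
    using Suc.prems(1) that
    by (intro polyfam_diff polyfam_mult) (auto simp: polyfam_def)
  have iH: "lin_indep r (\<lambda>j. H j 0)"
    unfolding lin_indep_def
  proof (rule allI, rule impI)
    fix c assume h: "(\<lambda>w. \<Sum>j<r. c j * H j 0 w) = (\<lambda>w. 0)"
    define d where "d j = (if j < r then G r 0 w0 * c j else - (\<Sum>i<r. c i * G i 0 w0))" for j
    have "(\<lambda>w. \<Sum>j<Suc r. d j * G j 0 w) = (\<lambda>w. 0)"
    proof
      fix w
      have "(\<Sum>j<Suc r. d j * G j 0 w) = (\<Sum>j<r. c j * H j 0 w)"
        by (simp add: d_def H_def sum_distrib_left sum_distrib_right sum_subtractf algebra_simps)
      then show "(\<Sum>j<Suc r. d j * G j 0 w) = 0" using h by (simp add: fun_eq_iff)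
    qed
    then have dz: "\<forall>j<Suc r. d j = 0" using Suc.prems(2) unfolding lin_indep_def by blast
    show "\<forall>j<r. c j = 0"
    proof (intro allI impI)
      fix j assume "j < r"
      then have "d j = 0" using dz by simp
      then have "G r 0 w0 * c j = 0" using \<open>j < r\<close> by (simp add: d_def)
      then show "c j = 0" using w0 by simp
    qed
  qed
  from Suc.IH[of H, OF pH iH] obtain s1 where s1: "\<forall>s\<ge>s1. lin_indep r (\<lambda>j. H j s)" by blast
  from Suc.prems(1)[of r] obtain p where p: "\<forall>s. G r s w0 = poly p (of_nat s)"
    unfolding polyfam_def by blast
  then have "poly p 0 \<noteq> 0" using w0 by (metis of_nat_0)
  from poly_eventually_nonzero[OF this] obtain s2 where s2: "\<forall>s\<ge>s2. poly p (of_nat s) \<noteq> 0" by blast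
  show ?case
  proof (intro exI[of _ "max s1 s2"] allI impI)
    fix s assume "max s1 s2 \<le> s"
    then have l: "lin_indep r (\<lambda>j. H j s)" and a: "G r s w0 \<noteq> 0" using s1 s2 p by auto
    show "lin_indep (Suc r) (\<lambda>j. G j s)"
      unfolding lin_indep_def
    proof (rule allI, rule impI)
      fix c assume h: "(\<lambda>w. \<Sum>j<Suc r. c j * G j s w) = (\<lambda>w. 0)"
      then have h': "(\<Sum>j<r. c j * G j s w) = - c r * G r s w" for w
        by (simp add: fun_eq_iff add_eq_0_iff)
      have "(\<lambda>w. \<Sum>j<r. c j * H j s w) = (\<lambda>w. 0)"
      proof
        fix w
        have "(\<Sum>j<r. c j * H j s w) = G r s w0 * (\<Sum>j<r. c j * G j s w) - (\<Sum>j<r. c j * G j s w0) * G r s w"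
          by (simp add: H_def sum_distrib_left sum_distrib_right sum_subtractf algebra_simps)
        also have "\<dots> = 0" by (simp add: h')
        finally show "(\<Sum>j<r. c j * H j s w) = 0" .
      qed
      then have cz: "\<forall>j<r. c j = 0" using l unfolding lin_indep_def by blast
      then have "c r * G r s w0 = 0" using h'[of w0] by simp
      then have "c r = 0" using a by simp
      with cz show "\<forall>j<Suc r. c j = 0" using less_Suc_eq by auto
    qed
  qed
qed

definition PP :: "nat list list \<Rightarrow> (nat list \<Rightarrow> bool) \<Rightarrow> 'a::comm_ring_1" where
  "PP ms P = (\<Sum>\<sigma> | \<sigma> permutes {..<length ms}. if P (concat (permute_list \<sigma> ms)) then 1 else 0)"

lemma Pn_PP: "Pn ms w = PP ms (\<lambda>v. v = w)"
  unfolding Pn_def PP_def permute_list_def by simp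

lemma PP_mset:
  assumes "mset ms = mset ms'"
  shows "PP ms P = PP ms' P"
proof -
  obtain \<pi> where pi: "\<pi> permutes {..<length ms'}" "permute_list \<pi> ms' = ms"
    using mset_eq_permutation[OF assms] by blast
  have len: "length ms = length ms'" using assms by (rule mset_eq_length)
  let ?f = "\<lambda>\<sigma>. if P (concat (permute_list \<sigma> ms')) then 1 else (0::'a)"
  have "PP ms P = (\<Sum>\<sigma> | \<sigma> permutes {..<length ms'}. ?f (\<pi> \<circ> \<sigma>))"
    unfolding PP_def len
    by (intro sum.cong refl) (simp add: permute_list_compose pi(2)[symmetric])
  also have "\<dots> = (\<Sum>\<sigma> | \<sigma> permutes {..<length ms'}. ?f \<sigma>)"
    using setum_permutations_compose_left[OF pi(1), of ?f] by simp
  finally show ?thesis unfolding PP_def .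
qed

lemma permute_list_transpose_last:
  assumes "length Y = Suc m" "b < Suc m" "q permutes {..<m}"
  shows "permute_list (transpose m b \<circ> q) Y =
         permute_list q (take m (permute_list (transpose m b) Y)) @ [Y ! b]"
proof -
  have q': "q permutes {..<length Y}"
    using assms by (auto intro: permutes_subset)
  have tp: "transpose m b permutes {..<length Y}" using assms
    by (intro permutes_swap_id) auto
  let ?X = "permute_list (transpose m b) Y"
  have qm: "q m = m" using permutes_not_in[OF assms(3), of m] by simp
  have xm: "?X ! m = Y ! b"
    using assms(1) by (simp add: permute_list_nth[OF tp] transpose_def)
  have lx: "length (take m ?X) = m" using assms(1) by simp
  have "permute_list q (take m ?X) = map (\<lambda>i. take m ?X ! q i) [0..<m]"
    unfolding permute_list_def[of q "take m ?X"] lx ..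
  also have "\<dots> = map (\<lambda>i. ?X ! q i) [0..<m]"
  proof (rule map_cong[OF refl])
    fix i assume "i \<in> set [0..<m]"
    then have "q i < m" using permutes_in_image[OF assms(3)] by simp
    then show "take m ?X ! q i = ?X ! q i" by (rule nth_take)
  qed
  finally have mp: "map (\<lambda>i. ?X ! q i) [0..<m] = permute_list q (take m ?X)" ..
  have "permute_list (transpose m b \<circ> q) Y = permute_list q ?X"
    by (rule permute_list_compose[OF q'])
  also have "\<dots> = map (\<lambda>i. ?X ! q i) [0..<Suc m]"
    unfolding permute_list_def[of q ?X] using assms(1) by simp
  also have "\<dots> = map (\<lambda>i. ?X ! q i) [0..<m] @ [?X ! q m]" by simp
  also have "\<dots> = permute_list q (take m ?X) @ [Y ! b]"
    by (simp only: mp qm xm)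
  finally show ?thesis .
qed

lemma PP_last:
  assumes "length Y = Suc m"
  shows "PP Y P = (\<Sum>b<Suc m. PP (take m (permute_list (transpose m b) Y)) (\<lambda>v. P (v @ Y ! b)))"
proof -
  have lt: "\<And>b. length (take m (permute_list (transpose m b) Y)) = m" using assms by simp
  have "PP Y P = (\<Sum>\<sigma> | \<sigma> permutes insert m {..<m}. if P (concat (permute_list \<sigma> Y)) then 1 else (0::'a))"
    unfolding PP_def assms lessThan_Suc by simp
  also have "\<dots> = (\<Sum>b\<in>insert m {..<m}. \<Sum>q | q permutes {..<m}.
      if P (concat (permute_list (transpose m b \<circ> q) Y)) then 1 else 0)"
    by (rule sum_over_permutations_insert) auto
  also have "\<dots> = (\<Sum>b<Suc m. PP (take m (permute_list (transpose m b) Y)) (\<lambda>v. P (v @ Y ! b)))"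
    unfolding lessThan_Suc[symmetric] PP_def lt
  proof (intro sum.cong refl)
    fix b q assume b: "b \<in> {..<Suc m}"
      and q: "q \<in> {\<sigma>. \<sigma> permutes {..<m}}"
    have "q permutes {..<m}" using q by simp
    then show "(if P (concat (permute_list (transpose m b \<circ> q) Y)) then 1 else (0::'a)) =
      (if P (concat (permute_list q (take m (permute_list (transpose m b) Y))) @ Y ! b) then 1 else 0)"
      using permute_list_transpose_last[OF assms, of b q] b by simp
  qed
  finally show ?thesis .
qed

lemma mset_take_transpose:
  assumes "length Y = Suc k" "b < Suc k"
  shows "mset (take k (permute_list (transpose k b) Y)) = mset Y - {#Y ! b#}"
proof -
  have tp: "transpose k b permutes {..<length Y}" using assms
    by (intro permutes_swap_id) auto
  let ?X = "permute_list (transpose k b) Y"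
  have "?X = take k ?X @ [?X ! k]"
    using assms by (metis Suc_le_eq le_refl length_permute_list take_Suc_conv_app_nth take_all)
  moreover have "?X ! k = Y ! b" using assms by (simp add: permute_list_nth[OF tp])
  moreover have "mset ?X = mset Y" using tp by simp
  ultimately have "mset Y = mset (take k ?X) + {#Y ! b#}"
    by (metis mset.simps(1) mset.simps(2) mset_append add_mset_add_single)
  then show ?thesis by simp
qed

lemma PP_empty_snoc_aux:
  "\<forall>Y P. length Y = m \<longrightarrow> PP (Y @ [[]]) P = (of_nat (Suc (length Y)) :: 'a::comm_ring_1) * PP Y P"
proof (induction m)
  case 0
  show ?case
  proof (intro allI impI)
    fix Y :: "nat list list" and P assume "length Y = 0"
    then have "Y = []" by simp
    then show "PP (Y @ [[]]) P = (of_nat (Suc (length Y)) :: 'a) * PP Y P"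
      using PP_last[of "[[]]" 0 P] by (simp add: PP_def)
  qed
next
  case (Suc m)
  show ?case
  proof (intro allI impI)
  fix Y :: "nat list list" and P assume Ylen: "length Y = Suc m"
  have L: "length (Y @ [[]]) = Suc (Suc m)" using Ylen by simp
  have "(PP (Y @ [[]]) P :: 'a) = (\<Sum>b<Suc (Suc m). PP (take (Suc m) (permute_list (transpose (Suc m) b) (Y @ [[]])))
      (\<lambda>v. P (v @ (Y @ [[]]) ! b)))"
    by (rule PP_last[OF L])
  also have "\<dots> = (\<Sum>b<Suc m. PP (take (Suc m) (permute_list (transpose (Suc m) b) (Y @ [[]])))
      (\<lambda>v. P (v @ Y ! b))) + PP Y P"
    using Ylen by (simp add: nth_append)
  also have "(\<Sum>b<Suc m. PP (take (Suc m) (permute_list (transpose (Suc m) b) (Y @ [[]])))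
      (\<lambda>v. P (v @ Y ! b)) :: 'a) = (\<Sum>b<Suc m. of_nat (Suc m) * PP (take m (permute_list (transpose m b) Y))
      (\<lambda>v. P (v @ Y ! b)))"
  proof (intro sum.cong refl)
    fix b assume b: "b \<in> {..<Suc m}"
    let ?Yb = "take m (permute_list (transpose m b) Y)"
    have m1: "mset (take (Suc m) (permute_list (transpose (Suc m) b) (Y @ [[]]))) = mset Y + {#[]#} - {#Y ! b#}"
      using mset_take_transpose[OF L, of b] b Ylen by (simp add: nth_append)
    have m2: "mset ?Yb = mset Y - {#Y ! b#}"
      using mset_take_transpose[of Y m b] b Ylen by simp
    have "Y ! b \<in># mset Y" using b Ylen by simp
    then have "mset (take (Suc m) (permute_list (transpose (Suc m) b) (Y @ [[]]))) = mset (?Yb @ [[]])"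
      using m1 m2 by (simp add: add_mset_diff_bothsides diff_union_swap2)
    then have "(PP (take (Suc m) (permute_list (transpose (Suc m) b) (Y @ [[]]))) (\<lambda>v. P (v @ Y ! b)) :: 'a)
        = PP (?Yb @ [[]]) (\<lambda>v. P (v @ Y ! b))" by (rule PP_mset)
    also have "\<dots> = of_nat (Suc m) * PP ?Yb (\<lambda>v. P (v @ Y ! b))"
    proof -
      have l: "length ?Yb = m" using Ylen by simp
      show ?thesis using Suc.IH[rule_format, OF l, of "\<lambda>v. P (v @ Y ! b)"] by (simp only: l)
    qed
    finally show "(PP (take (Suc m) (permute_list (transpose (Suc m) b) (Y @ [[]]))) (\<lambda>v. P (v @ Y ! b)) :: 'a)
        = of_nat (Suc m) * PP ?Yb (\<lambda>v. P (v @ Y ! b))" .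
  qed
  also have "\<dots> = of_nat (Suc m) * PP Y P"
    by (simp only: sum_distrib_left[symmetric] PP_last[OF Ylen, symmetric])
  finally show "PP (Y @ [[]]) P = (of_nat (Suc (length Y)) :: 'a) * PP Y P" using Ylen by (simp add: algebra_simps)
  qed
qed

lemma PP_empty_snoc:
  "PP (Y @ [[]]) P = (of_nat (Suc (length Y)) :: 'a::comm_ring_1) * PP Y P"
  using PP_empty_snoc_aux by blast

lemma PP_empties:
  "PP (Y @ replicate e []) P * (of_nat (fact (length Y)) :: 'a::comm_ring_1)
     = of_nat (fact (length Y + e)) * PP Y P"
proof (induction e)
  case 0 then show ?case by simp
next
  case (Suc e)
  have "Y @ replicate (Suc e) [] = (Y @ replicate e []) @ [[]]"
    by (simp add: replicate_append_same)
  then have "PP (Y @ replicate (Suc e) []) P = PP ((Y @ replicate e []) @ [[]]) P"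
    by (simp only:)
  also have "\<dots> = (of_nat (Suc (length Y + e)) :: 'a) * PP (Y @ replicate e []) P"
    by (subst PP_empty_snoc) simp
  finally have A: "PP (Y @ replicate (Suc e) []) P = (of_nat (Suc (length Y + e)) :: 'a) * PP (Y @ replicate e []) P" .
  have B: "(of_nat (fact (length Y + Suc e)) :: 'a) = of_nat (Suc (length Y + e)) * of_nat (fact (length Y + e))"
    by (simp only: fact_Suc of_nat_mult add_Suc_right of_nat_id)
  have "PP (Y @ replicate (Suc e) []) P * (of_nat (fact (length Y)) :: 'a)
      = of_nat (Suc (length Y + e)) * (PP (Y @ replicate e []) P * of_nat (fact (length Y)))"
    unfolding A by (simp only: ac_simps)
  also have "\<dots> = of_nat (Suc (length Y + e)) * (of_nat (fact (length Y + e)) * PP Y P)"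
    unfolding Suc.IH ..
  also have "\<dots> = of_nat (fact (length Y + Suc e)) * PP Y P"
    unfolding B by (simp only: ac_simps)
  finally show ?case .
qed

definition Sset :: "nat \<Rightarrow> nat \<Rightarrow> nat list \<Rightarrow> (nat list \<times> nat set) set" where
  "Sset c s w = {(v, D). set v \<subseteq> insert c (set w) \<and> length v = length w + s \<and>
      D \<subseteq> {i. i < length v \<and> v ! i = c} \<and> card D = s \<and> nths v (- D) = w}"

definition Lam :: "nat \<Rightarrow> nat \<Rightarrow> nat list \<Rightarrow> (nat list \<Rightarrow> 'a) \<Rightarrow> 'a::comm_ring_1" where
  "Lam c s w g = (\<Sum>x\<in>Sset c s w. g (fst x))"

lemma finite_Sset: "finite (Sset c s w)"
proof -
  have "Sset c s w \<subseteq> {v. set v \<subseteq> insert c (set w) \<and> length v = length w + s} \<times> Pow {..<length w + s}"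
    unfolding Sset_def by auto
  moreover have "finite ({v. set v \<subseteq> insert c (set w) \<and> length v = length w + s} \<times> Pow {..<length w + s})"
    by (intro finite_cartesian_product finite_lists_length_eq) auto
  ultimately show ?thesis by (rule finite_subset)
qed

lemma Sset_0: "Sset c 0 w = {(w, {})}"
proof -
  have hD: "D = {}" if "D \<subseteq> {i. i < length v \<and> v ! i = c}" "card D = 0" for v D
  proof -
    have "finite D" using that(1) by (rule finite_subset) auto
    then show ?thesis using that(2) by simp
  qed
  have "(v, D) \<in> Sset c 0 w \<longleftrightarrow> v = w \<and> D = {}" for v D
  proof
    assume "(v, D) \<in> Sset c 0 w"
    then have a: "D \<subseteq> {i. i < length v \<and> v ! i = c}" "card D = 0" "nths v (- D) = w"
      unfolding Sset_def by auto
    then have "D = {}" using hD by blast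
    then show "v = w \<and> D = {}" using a(3) by (simp add: nths_all)
  next
    assume "v = w \<and> D = {}"
    then show "(v, D) \<in> Sset c 0 w" by (auto simp: Sset_def nths_all)
  qed
  then show ?thesis by auto
qed

lemma Lam_0: "Lam c 0 w g = g w"
  unfolding Lam_def Sset_0 by simp

lemma Lam_lin: "Lam c s w (\<lambda>v. \<Sum>j\<in>J. a j * g j v) = (\<Sum>j\<in>J. a j * Lam c s w (g j))"
  unfolding Lam_def by (simp add: sum_distrib_left sum.swap[of _ J])

lemma Lam_count:
  "Lam c s w (\<lambda>v. if v = u then 1 else 0) = of_nat (card {D. (u, D) \<in> Sset c s w})"
proof -
  have "Lam c s w (\<lambda>v. if v = u then 1 else 0) = (\<Sum>x\<in>Sset c s w. if fst x = u then 1 else (0::'a))"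
    unfolding Lam_def ..
  also have "\<dots> = of_nat (card {x\<in>Sset c s w. fst x = u})"
  proof -
    have e: "{x\<in>Sset c s w. fst x = u} = Sset c s w \<inter> {x. fst x = u}" by auto
    show ?thesis unfolding e by (simp add: sum.If_cases[OF finite_Sset])
  qed
  also have "card {x\<in>Sset c s w. fst x = u} = card {D. (u, D) \<in> Sset c s w}"
  proof -
    have "bij_betw snd {x\<in>Sset c s w. fst x = u} {D. (u, D) \<in> Sset c s w}"
      by (rule bij_betw_byWitness[where f' = "\<lambda>D. (u, D)"]) auto
    then show ?thesis by (rule bij_betw_same_card)
  qed
  finally show ?thesis .
qed

definition tvl :: "nat list list \<Rightarrow> nat list \<Rightarrow> (nat \<times> nat) list" where
  "tvl C ks = concat (map (\<lambda>k. map (\<lambda>j. (k, j)) [0..<length (C ! k)]) ks)"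

definition ltr :: "nat list list \<Rightarrow> nat \<times> nat \<Rightarrow> nat" where
  "ltr C t = C ! fst t ! snd t"

definition dele :: "(nat \<times> nat) set \<Rightarrow> nat list list \<Rightarrow> nat list list" where
  "dele E C = map (\<lambda>k. map (\<lambda>j. C ! k ! j) (filter (\<lambda>j. (k, j) \<notin> E) [0..<length (C ! k)])) [0..<length C]"

definition ctags :: "nat \<Rightarrow> nat list list \<Rightarrow> (nat \<times> nat) set" where
  "ctags c C = {(k, j). k < length C \<and> j < length (C ! k) \<and> C ! k ! j = c}"

lemma tvl_distinct: "distinct ks \<Longrightarrow> distinct (tvl C ks)"
  by (induction ks) (auto simp: tvl_def distinct_map inj_on_def)

lemma set_tvl: "set (tvl C ks) = {(k, j). k \<in> set ks \<and> j < length (C ! k)}"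
  by (auto simp: tvl_def)

lemma concat_tvl: "concat (map (\<lambda>k. C ! k) ks) = map (ltr C) (tvl C ks)"
  by (induction ks) (auto simp: tvl_def ltr_def o_def map_nth)

lemma concat_dele:
  "set ks \<subseteq> {..<length C} \<Longrightarrow>
   concat (map (\<lambda>k. dele E C ! k) ks) = map (ltr C) (filter (\<lambda>t. t \<notin> E) (tvl C ks))"
  by (induction ks) (auto simp: tvl_def ltr_def dele_def filter_map o_def)

lemma nths_compl_filter:
  assumes "distinct tv" "D \<subseteq> {..<length tv}"
  shows "nths tv (- D) = filter (\<lambda>t. t \<notin> (\<lambda>i. tv ! i) ` D) tv"
proof -
  have "set (nths tv (- D)) = set tv - (\<lambda>i. tv ! i) ` D"
    using assms by (auto simp: set_nths in_set_conv_nth nth_eq_iff_index_eq; blast)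
  then have "nths tv (- D) = filter (\<lambda>x. x \<in> set tv - (\<lambda>i. tv ! i) ` D) tv"
    using filter_in_nths[OF assms(1), of "- D"] by simp
  also have "\<dots> = filter (\<lambda>t. t \<notin> (\<lambda>i. tv ! i) ` D) tv"
    by (rule filter_cong) auto
  finally show ?thesis .
qed

lemma card_D_E:
  assumes dist: "distinct tv"
  shows "card {D. D \<subseteq> {i. i < length tv \<and> lt (tv ! i) = c} \<and> card D = s \<and> map lt (nths tv (- D)) = w}
       = card {E. E \<subseteq> {t\<in>set tv. lt t = c} \<and> card E = s \<and> map lt (filter (\<lambda>t. t \<notin> E) tv) = w}"
proof -
  let ?f = "\<lambda>D. (\<lambda>i. tv ! i) ` D"
  let ?g = "\<lambda>E. {i. i < length tv \<and> tv ! i \<in> E}"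
  have inj: "inj_on (\<lambda>i. tv ! i) D" if "D \<subseteq> {..<length tv}" for D
    using inj_on_nth[OF dist, of D] that by auto
  have "bij_betw ?f {D. D \<subseteq> {i. i < length tv \<and> lt (tv ! i) = c} \<and> card D = s \<and> map lt (nths tv (- D)) = w}
       {E. E \<subseteq> {t\<in>set tv. lt t = c} \<and> card E = s \<and> map lt (filter (\<lambda>t. t \<notin> E) tv) = w}"
  proof (rule bij_betw_byWitness[where f' = ?g])
    show "\<forall>D\<in>{D. D \<subseteq> {i. i < length tv \<and> lt (tv ! i) = c} \<and> card D = s \<and> map lt (nths tv (- D)) = w}. ?g (?f D) = D"
      using dist by (auto simp: nth_eq_iff_index_eq)
    show "\<forall>E\<in>{E. E \<subseteq> {t\<in>set tv. lt t = c} \<and> card E = s \<and> map lt (filter (\<lambda>t. t \<notin> E) tv) = w}. ?f (?g E) = E"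
      by (auto simp: in_set_conv_nth image_iff)
    show "?f ` {D. D \<subseteq> {i. i < length tv \<and> lt (tv ! i) = c} \<and> card D = s \<and> map lt (nths tv (- D)) = w}
        \<subseteq> {E. E \<subseteq> {t\<in>set tv. lt t = c} \<and> card E = s \<and> map lt (filter (\<lambda>t. t \<notin> E) tv) = w}"
    proof (rule image_subsetI, unfold mem_Collect_eq, elim conjE, intro conjI)
      fix D assume D: "D \<subseteq> {i. i < length tv \<and> lt (tv ! i) = c}" and "card D = s" and
        m: "map lt (nths tv (- D)) = w"
      have D': "D \<subseteq> {..<length tv}" using D by auto
      show "?f D \<subseteq> {t\<in>set tv. lt t = c}" using D by auto
      show "card (?f D) = s" using card_image[OF inj[OF D']] \<open>card D = s\<close> by simp
      show "map lt (filter (\<lambda>t. t \<notin> ?f D) tv) = w"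
        using m nths_compl_filter[OF dist D'] by simp
    qed
    show "?g ` {E. E \<subseteq> {t\<in>set tv. lt t = c} \<and> card E = s \<and> map lt (filter (\<lambda>t. t \<notin> E) tv) = w}
        \<subseteq> {D. D \<subseteq> {i. i < length tv \<and> lt (tv ! i) = c} \<and> card D = s \<and> map lt (nths tv (- D)) = w}"
    proof (rule image_subsetI, unfold mem_Collect_eq, elim conjE, intro conjI)
      fix E assume E: "E \<subseteq> {t\<in>set tv. lt t = c}" and "card E = s" and
        m: "map lt (filter (\<lambda>t. t \<notin> E) tv) = w"
      have G': "?g E \<subseteq> {..<length tv}" by auto
      have fg: "?f (?g E) = E" using E by (auto simp: in_set_conv_nth image_iff)
      show "?g E \<subseteq> {i. i < length tv \<and> lt (tv ! i) = c}" using E by auto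
      show "card (?g E) = s" using card_image[OF inj[OF G']] fg \<open>card E = s\<close> by simp
      show "map lt (nths tv (- ?g E)) = w"
        using m nths_compl_filter[OF dist G'] fg by simp
    qed
  qed
  then show ?thesis by (rule bij_betw_same_card)
qed

lemma sum_if_card: "finite A \<Longrightarrow> (\<Sum>x\<in>A. if P x then 1 else 0) = (of_nat (card {x\<in>A. P x}) :: 'a::comm_semiring_1)"
proof -
  assume f: "finite A"
  have e: "{x\<in>A. P x} = A \<inter> {x. P x}" by auto
  show ?thesis unfolding e by (simp add: sum.If_cases[OF f])
qed

lemma Sset_iff:
  "(v, D) \<in> Sset c s w \<longleftrightarrow> D \<subseteq> {i. i < length v \<and> v ! i = c} \<and> card D = s \<and> nths v (- D) = w"
proof
  assume "(v, D) \<in> Sset c s w" then show "D \<subseteq> {i. i < length v \<and> v ! i = c} \<and> card D = s \<and> nths v (- D) = w"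
    unfolding Sset_def by auto
next
  assume a: "D \<subseteq> {i. i < length v \<and> v ! i = c} \<and> card D = s \<and> nths v (- D) = w"
  then have D: "D \<subseteq> {..<length v}" by auto
  have "length w = card {i. i < length v \<and> i \<in> - D}"
    using a by (metis length_nths)
  also have "{i. i < length v \<and> i \<in> - D} = {..<length v} - D" by auto
  also have "card ({..<length v} - D) = length v - card D"
    using D by (simp add: card_Diff_subset finite_subset)
  finally have l: "length v = length w + s" using a D card_mono[OF _ D] by simp
  have "set v \<subseteq> insert c (set w)"
  proof
    fix x assume "x \<in> set v"
    then obtain i where i: "i < length v" "x = v ! i" by (auto simp: in_set_conv_nth)
    show "x \<in> insert c (set w)"
    proof (cases "i \<in> D")
      case True then show ?thesis using a i by auto
    next
      case False
      then have "x \<in> set (nths v (- D))" using i by (auto simp: set_nths)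
      then show ?thesis using a by simp
    qed
  qed
  then show "(v, D) \<in> Sset c s w" using a l unfolding Sset_def by auto
qed

lemma finite_ctags: "finite (ctags c C)"
proof -
  have "ctags c C \<subseteq> (SIGMA k:{..<length C}. {..<length (C ! k)})" by (auto simp: ctags_def)
  then show ?thesis by (rule finite_subset) auto
qed

lemma length_dele [simp]: "length (dele E C) = length C"
  by (simp add: dele_def)

lemma Lam_Pn:
  "Lam c s w (Pn C) = (\<Sum>E\<in>{E. E \<subseteq> ctags c C \<and> card E = s}. Pn (dele E C) w)"
proof -
  let ?n = "length C"
  let ?Perm = "{\<sigma>. \<sigma> permutes {..<?n}}"
  let ?conc = "\<lambda>\<sigma>. concat (map (\<lambda>k. C ! \<sigma> k) [0..<?n])"
  let ?concE = "\<lambda>E \<sigma>. concat (map (\<lambda>k. dele E C ! \<sigma> k) [0..<?n])"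
  let ?Eset = "{E. E \<subseteq> ctags c C \<and> card E = s}"
  have finE: "finite ?Eset" using finite_ctags by auto
  have eq: "Pn C = (\<lambda>v. \<Sum>\<sigma>\<in>?Perm. 1 * (if v = ?conc \<sigma> then 1 else 0))"
    unfolding Pn_def by (auto simp: fun_eq_iff intro!: sum.cong)
  have "Lam c s w (Pn C) = (\<Sum>\<sigma>\<in>?Perm. 1 * Lam c s w (\<lambda>v. if v = ?conc \<sigma> then 1 else 0))"
    unfolding eq by (rule Lam_lin[of c s w "\<lambda>\<sigma>. 1" "\<lambda>\<sigma> v. if v = ?conc \<sigma> then 1 else 0" ?Perm])
  also have "\<dots> = (\<Sum>\<sigma>\<in>?Perm. of_nat (card {D. (?conc \<sigma>, D) \<in> Sset c s w}))"
    by (simp add: Lam_count)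
  also have "\<dots> = (\<Sum>\<sigma>\<in>?Perm. of_nat (card {E\<in>?Eset. ?concE E \<sigma> = w}))"
  proof (intro sum.cong refl arg_cong[where f = of_nat])
    fix \<sigma> assume "\<sigma> \<in> ?Perm"
    then have sp: "\<sigma> permutes {..<?n}" by simp
    let ?ks = "map \<sigma> [0..<?n]"
    let ?tv = "tvl C ?ks"
    have "set ?ks = \<sigma> ` {..<?n}" by (simp add: atLeast0LessThan)
    then have sks: "set ?ks = {..<?n}" using permutes_image[OF sp] by simp
    have dks: "distinct ?ks"
      using permutes_inj_on[OF sp] by (simp add: distinct_map inj_on_subset)
    have dist: "distinct ?tv" by (rule tvl_distinct[OF dks])
    have conc: "?conc \<sigma> = map (ltr C) ?tv"
      using concat_tvl[of C ?ks] by (simp add: o_def)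
    have concE: "?concE E \<sigma> = map (ltr C) (filter (\<lambda>t. t \<notin> E) ?tv)" for E
      using concat_dele[of ?ks C E] sks by (simp add: o_def)
    have ct: "{t\<in>set ?tv. ltr C t = c} = ctags c C"
      unfolding set_tvl sks by (auto simp: ctags_def ltr_def)
    have e1: "{D. (?conc \<sigma>, D) \<in> Sset c s w} =
        {D. D \<subseteq> {i. i < length ?tv \<and> ltr C (?tv ! i) = c} \<and> card D = s \<and> map (ltr C) (nths ?tv (- D)) = w}"
    proof -
      have "{i. i < length ?tv \<and> map (ltr C) ?tv ! i = c} = {i. i < length ?tv \<and> ltr C (?tv ! i) = c}"
        by auto
      then show ?thesis unfolding Sset_iff conc by (simp add: nths_map)
    qed
    have e2: "card {D. D \<subseteq> {i. i < length ?tv \<and> ltr C (?tv ! i) = c} \<and> card D = s \<and> map (ltr C) (nths ?tv (- D)) = w} = card {E. E \<subseteq> {t\<in>set ?tv. ltr C t = c} \<and> card E = s \<and> map (ltr C) (filter (\<lambda>t. t \<notin> E) ?tv) = w}"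
      by (rule card_D_E[OF dist])
    have e3: "{E. E \<subseteq> {t\<in>set ?tv. ltr C t = c} \<and> card E = s \<and> map (ltr C) (filter (\<lambda>t. t \<notin> E) ?tv) = w}
        = {E\<in>?Eset. ?concE E \<sigma> = w}"
      unfolding ct concE by auto
    from e1 e2 e3 show "card {D. (?conc \<sigma>, D) \<in> Sset c s w} = card {E\<in>?Eset. ?concE E \<sigma> = w}" by simp
  qed
  also have "\<dots> = (\<Sum>\<sigma>\<in>?Perm. \<Sum>E\<in>?Eset. if ?concE E \<sigma> = w then 1 else 0)"
    by (simp add: sum_if_card[OF finE])
  also have "\<dots> = (\<Sum>E\<in>?Eset. \<Sum>\<sigma>\<in>?Perm. if ?concE E \<sigma> = w then 1 else 0)"
    by (rule sum.swap)
  also have "\<dots> = (\<Sum>E\<in>?Eset. Pn (dele E C) w)"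
    unfolding Pn_def by simp
  finally show ?thesis .
qed

lemma ctags_app:
  assumes "length B = N"
  shows "ctags c (B @ replicate s [c]) = ctags c B \<union> (\<lambda>k. (k, 0)) ` {N..<N + s}"
proof (rule set_eqI)
  fix t :: "nat \<times> nat"
  obtain k j where t: "t = (k, j)" by (cases t)
  show "t \<in> ctags c (B @ replicate s [c]) \<longleftrightarrow> t \<in> ctags c B \<union> (\<lambda>k. (k, 0)) ` {N..<N + s}"
  proof (cases "k < N")
    case True then show ?thesis using assms by (auto simp: t ctags_def nth_append)
  next
    case False then show ?thesis using assms by (auto simp: t ctags_def nth_append)
  qed
qed

lemma ctags_fst: "t \<in> ctags c B \<Longrightarrow> fst t < length B"
  by (auto simp: ctags_def)

lemma dele_app:
  assumes "length B = N" "E1 \<subseteq> ctags c B" "K \<subseteq> {N..<N + s}"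
  shows "dele (E1 \<union> (\<lambda>k. (k, 0)) ` K) (B @ replicate s [c]) =
         dele E1 B @ map (\<lambda>k. if k \<in> K then [] else [c]) [N..<N + s]"
proof -
  let ?E = "E1 \<union> (\<lambda>k. (k, 0)) ` K"
  let ?C = "B @ replicate s [c]"
  have lC: "length ?C = N + s" using assms(1) by simp
  have "[0..<length ?C] = [0..<N] @ [N..<N + s]" unfolding lC by (rule upt_add_eq_append) simp
  then have "dele ?E ?C = map (\<lambda>k. map (\<lambda>j. ?C ! k ! j) (filter (\<lambda>j. (k, j) \<notin> ?E) [0..<length (?C ! k)])) [0..<N]
      @ map (\<lambda>k. map (\<lambda>j. ?C ! k ! j) (filter (\<lambda>j. (k, j) \<notin> ?E) [0..<length (?C ! k)])) [N..<N + s]"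
    unfolding dele_def by simp
  also have "map (\<lambda>k. map (\<lambda>j. ?C ! k ! j) (filter (\<lambda>j. (k, j) \<notin> ?E) [0..<length (?C ! k)])) [0..<N] = dele E1 B"
    unfolding dele_def assms(1)[symmetric]
  proof (rule map_cong[OF refl])
    fix k assume "k \<in> set [0..<length B]"
    then have k: "k < length B" by simp
    have "filter (\<lambda>j. (k, j) \<notin> ?E) [0..<length (B ! k)] = filter (\<lambda>j. (k, j) \<notin> E1) [0..<length (B ! k)]"
      using k assms by (intro filter_cong) auto
    then show "map (\<lambda>j. ?C ! k ! j) (filter (\<lambda>j. (k, j) \<notin> ?E) [0..<length (?C ! k)]) =
        map (\<lambda>j. B ! k ! j) (filter (\<lambda>j. (k, j) \<notin> E1) [0..<length (B ! k)])"
      using k by (simp add: nth_append)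
  qed
  also have "map (\<lambda>k. map (\<lambda>j. ?C ! k ! j) (filter (\<lambda>j. (k, j) \<notin> ?E) [0..<length (?C ! k)])) [N..<N + s]
      = map (\<lambda>k. if k \<in> K then [] else [c]) [N..<N + s]"
  proof (rule map_cong[OF refl])
    fix k assume "k \<in> set [N..<N + s]"
    then have k: "N \<le> k" "k < N + s" by auto
    have ck: "?C ! k = [c]" using k assms(1) by (simp add: nth_append)
    have "(k, 0) \<in> ?E \<longleftrightarrow> k \<in> K" using k assms ctags_fst[of "(k, 0)" c B] by auto
    then show "map (\<lambda>j. ?C ! k ! j) (filter (\<lambda>j. (k, j) \<notin> ?E) [0..<length (?C ! k)]) =
        (if k \<in> K then [] else [c])"
      unfolding ck by auto
  qed
  finally show ?thesis .
qed

lemma mset_map_if: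
  "distinct ks \<Longrightarrow> mset (map (\<lambda>k. if k \<in> K then [] else [c]) ks) =
     replicate_mset (card (set ks \<inter> K)) [] + replicate_mset (card (set ks - K)) [c]"
proof (induction ks)
  case Nil then show ?case by simp
next
  case (Cons a ks)
  then have a: "a \<notin> set ks" by simp
  show ?case
  proof (cases "a \<in> K")
    case True
    then have "insert a (set ks) \<inter> K = insert a (set ks \<inter> K)" "insert a (set ks) - K = set ks - K" by auto
    then show ?thesis using Cons True a by simp
  next
    case False
    then have "insert a (set ks) \<inter> K = set ks \<inter> K" "insert a (set ks) - K = insert a (set ks - K)" by auto
    then show ?thesis using Cons False a by simp
  qed
qed

lemma Pn_dele_app:
  assumes "length B = N" "E1 \<subseteq> ctags c B" "K \<subseteq> {N..<N + s}"
  shows "Pn (dele (E1 \<union> (\<lambda>k. (k, 0)) ` K) (B @ replicate s [c])) w * (of_nat (fact (N + (s - card K))) :: 'a::comm_ring_1)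
       = of_nat (fact (N + s)) * Pn (dele E1 B @ replicate (s - card K) [c]) w"
proof -
  have cK: "card K \<le> s" using card_mono[OF _ assms(3)] by simp
  have "mset (map (\<lambda>k. if k \<in> K then [] else [c]) [N..<N + s]) =
      replicate_mset (card K) [] + replicate_mset (s - card K) [c]"
  proof -
    have "{N..<N + s} \<inter> K = K" using assms(3) by auto
    moreover have "card ({N..<N + s} - K) = s - card K"
      using assms(3) by (simp add: card_Diff_subset finite_subset)
    ultimately show ?thesis using mset_map_if[of "[N..<N + s]" K c] by simp
  qed
  then have m: "mset (dele (E1 \<union> (\<lambda>k. (k, 0)) ` K) (B @ replicate s [c])) =
       mset ((dele E1 B @ replicate (s - card K) [c]) @ replicate (card K) [])"
    unfolding dele_app[OF assms] by (simp add: ac_simps)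
  have "Pn (dele (E1 \<union> (\<lambda>k. (k, 0)) ` K) (B @ replicate s [c])) w =
       (PP ((dele E1 B @ replicate (s - card K) [c]) @ replicate (card K) []) (\<lambda>v. v = w) :: 'a)"
    unfolding Pn_PP by (rule PP_mset[OF m])
  moreover have "PP ((dele E1 B @ replicate (s - card K) [c]) @ replicate (card K) []) (\<lambda>v. v = w)
      * (of_nat (fact (length (dele E1 B @ replicate (s - card K) [c]))) :: 'a)
      = of_nat (fact (length (dele E1 B @ replicate (s - card K) [c]) + card K)) *
        PP (dele E1 B @ replicate (s - card K) [c]) (\<lambda>v. v = w)"
    by (rule PP_empties)
  moreover have "length (dele E1 B @ replicate (s - card K) [c]) = N + (s - card K)"
    using assms(1) by simp
  moreover have "N + (s - card K) + card K = N + s" using cK by simp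
  ultimately show ?thesis using assms(1) by (simp add: Pn_PP)
qed

lemma card_K_choose:
  "card {K \<in> Pow {N..<N + s}. card K = s - a \<and> a \<le> s} = s choose a"
proof (cases "a \<le> s")
  case True
  have "{K \<in> Pow {N..<N + s}. card K = s - a \<and> a \<le> s} = {K. K \<subseteq> {N..<N + s} \<and> card K = s - a}"
    using True by auto
  also have "card \<dots> = s choose (s - a)" by (simp add: n_subsets)
  also have "\<dots> = s choose a" using True by (simp add: binomial_symmetric[symmetric])
  finally show ?thesis .
next
  case False then show ?thesis by simp
qed

lemma inner_sum:
  fixes w :: "nat list"
  assumes "length B = N" "E1 \<subseteq> ctags c B"
  shows "(\<Sum>K\<in>Pow {N..<N + s}. if card E1 + card K = s
           then Pn (dele (E1 \<union> (\<lambda>k. (k, 0)) ` K) (B @ replicate s [c])) w else 0)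
       = of_nat (s choose card E1) * ((of_nat (fact (N + s)) :: 'a::field_char_0) *
           Pn (dele E1 B @ replicate (card E1) [c]) w / of_nat (fact (N + card E1)))"
proof -
  let ?V = "(of_nat (fact (N + s)) :: 'a) * Pn (dele E1 B @ replicate (card E1) [c]) w / of_nat (fact (N + card E1))"
  have "(\<Sum>K\<in>Pow {N..<N + s}. if card E1 + card K = s
           then Pn (dele (E1 \<union> (\<lambda>k. (k, 0)) ` K) (B @ replicate s [c])) w else 0)
      = (\<Sum>K\<in>Pow {N..<N + s}. (if card K = s - card E1 \<and> card E1 \<le> s then 1 else 0) * ?V)"
  proof (intro sum.cong refl)
    fix K assume K: "K \<in> Pow {N..<N + s}"
    show "(if card E1 + card K = s then Pn (dele (E1 \<union> (\<lambda>k. (k, 0)) ` K) (B @ replicate s [c])) w else 0)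
        = (if card K = s - card E1 \<and> card E1 \<le> s then 1 else 0) * ?V"
    proof (cases "card E1 + card K = s")
      case True
      then have sK: "s - card K = card E1" by simp
      have K': "K \<subseteq> {N..<N + s}" using K by simp
      have X: "Pn (dele (E1 \<union> (\<lambda>k. (k, 0)) ` K) (B @ replicate s [c])) w * (of_nat (fact (N + (s - card K))) :: 'a)
          = of_nat (fact (N + s)) * Pn (dele E1 B @ replicate (s - card K) [c]) w"
        by (rule Pn_dele_app[OF assms K'])
      have "Pn (dele (E1 \<union> (\<lambda>k. (k, 0)) ` K) (B @ replicate s [c])) w * (of_nat (fact (N + card E1)) :: 'a)
          = of_nat (fact (N + s)) * Pn (dele E1 B @ replicate (card E1) [c]) w"
        using X unfolding sK .
      then have "Pn (dele (E1 \<union> (\<lambda>k. (k, 0)) ` K) (B @ replicate s [c])) w = ?V"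
        by (simp add: field_simps)
      then show ?thesis using True by auto
    next
      case False then show ?thesis by auto
    qed
  qed
  also have "\<dots> = of_nat (card {K \<in> Pow {N..<N + s}. card K = s - card E1 \<and> card E1 \<le> s}) * ?V"
    by (simp only: sum_distrib_right[symmetric] sum_if_card[OF finite_Pow_iff[THEN iffD2, OF finite_atLeastLessThan]])
  also have "\<dots> = of_nat (s choose card E1) * ?V" by (simp only: card_K_choose)
  finally show ?thesis .
qed

lemma Lam_key:
  assumes "length B = N"
  shows "Lam c s w (Pn (B @ replicate s [c])) =
    (\<Sum>E1\<in>Pow (ctags c B). of_nat (s choose card E1) * ((of_nat (fact (N + s)) :: 'a::field_char_0) *
           Pn (dele E1 B @ replicate (card E1) [c]) w / of_nat (fact (N + card E1))))"
proof -
  let ?C = "B @ replicate s [c]"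
  let ?A = "ctags c B"
  let ?Ks = "{N..<N + s}"
  let ?img = "\<lambda>K. (\<lambda>k. (k, 0::nat)) ` K"
  let ?f = "\<lambda>(E1, K). E1 \<union> ?img K"
  let ?F = "\<lambda>E. if card E = s then Pn (dele E ?C) w else (0::'a)"
  have ctC: "ctags c ?C = ?A \<union> ?img ?Ks" by (rule ctags_app[OF assms])
  have finA: "finite ?A" by (rule finite_ctags)
  have disj: "E1 \<inter> ?img K = {}" if "E1 \<subseteq> ?A" "K \<subseteq> ?Ks" for E1 K
    using that ctags_fst[of _ c B] assms by fastforce
  have cardf: "card (E1 \<union> ?img K) = card E1 + card K" if "E1 \<subseteq> ?A" "K \<subseteq> ?Ks" for E1 K
  proof -
    have "finite E1" using finite_subset[OF that(1) finA] .
    moreover have "finite K" using that(2) by (rule finite_subset) simp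
    moreover have "card (?img K) = card K" by (rule card_image) (auto simp: inj_on_def)
    ultimately show ?thesis using disj[OF that] by (simp add: card_Un_disjoint)
  qed
  have bij: "bij_betw ?f (Pow ?A \<times> Pow ?Ks) (Pow (ctags c ?C))"
  proof (rule bij_betw_byWitness[where f' = "\<lambda>E. (E \<inter> ?A, {k. (k, 0) \<in> E \<and> N \<le> k})"])
    show "\<forall>a\<in>Pow ?A \<times> Pow ?Ks. (?f a \<inter> ?A, {k. (k, 0) \<in> ?f a \<and> N \<le> k}) = a"
    proof
      fix a assume a: "a \<in> Pow ?A \<times> Pow ?Ks"
      obtain E1 K where aa: "a = (E1, K)" by (cases a)
      have E1: "E1 \<subseteq> ?A" and K: "K \<subseteq> ?Ks" using a aa by auto
      have "(E1 \<union> ?img K) \<inter> ?A = E1" using E1 disj[OF order_refl, of K] K ctags_fst[of _ c B] assms by fastforce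
      moreover have "{k. (k, 0) \<in> E1 \<union> ?img K \<and> N \<le> k} = K"
        using E1 K ctags_fst[of _ c B] assms by fastforce
      ultimately show "(?f a \<inter> ?A, {k. (k, 0) \<in> ?f a \<and> N \<le> k}) = a" using aa by simp
    qed
    show "\<forall>E\<in>Pow (ctags c ?C). ?f (E \<inter> ?A, {k. (k, 0) \<in> E \<and> N \<le> k}) = E"
    proof
      fix E assume "E \<in> Pow (ctags c ?C)"
      then have E: "E \<subseteq> ?A \<union> ?img ?Ks" using ctC by simp
      show "?f (E \<inter> ?A, {k. (k, 0) \<in> E \<and> N \<le> k}) = E"
        using E by auto
    qed
    show "?f ` (Pow ?A \<times> Pow ?Ks) \<subseteq> Pow (ctags c ?C)" unfolding ctC by auto
    show "(\<lambda>E. (E \<inter> ?A, {k. (k, 0) \<in> E \<and> N \<le> k})) ` Pow (ctags c ?C) \<subseteq> Pow ?A \<times> Pow ?Ks"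
      unfolding ctC using ctags_fst[of _ c B] assms by fastforce
  qed
  have "Lam c s w (Pn ?C) = (\<Sum>E\<in>{E. E \<subseteq> ctags c ?C \<and> card E = s}. Pn (dele E ?C) w)"
    by (rule Lam_Pn)
  also have "\<dots> = (\<Sum>E\<in>Pow (ctags c ?C). ?F E)"
  proof -
    have "{E. E \<subseteq> ctags c ?C \<and> card E = s} = Pow (ctags c ?C) \<inter> {E. card E = s}" by auto
    then show ?thesis by (simp add: sum.If_cases finite_ctags)
  qed
  also have "\<dots> = (\<Sum>x\<in>Pow ?A \<times> Pow ?Ks. ?F (?f x))"
    by (rule sum.reindex_bij_betw[OF bij, symmetric])
  also have "\<dots> = (\<Sum>E1\<in>Pow ?A. \<Sum>K\<in>Pow ?Ks. ?F (E1 \<union> ?img K))"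
    unfolding sum.cartesian_product by (intro sum.cong refl) (auto split: prod.split)
  also have "\<dots> = (\<Sum>E1\<in>Pow ?A. \<Sum>K\<in>Pow ?Ks. if card E1 + card K = s
           then Pn (dele (E1 \<union> ?img K) ?C) w else 0)"
    by (intro sum.cong refl) (simp add: cardf)
  also have "\<dots> = (\<Sum>E1\<in>Pow ?A. of_nat (s choose card E1) * ((of_nat (fact (N + s)) :: 'a) *
           Pn (dele E1 B @ replicate (card E1) [c]) w / of_nat (fact (N + card E1))))"
    by (intro sum.cong refl inner_sum[OF assms]) simp
  finally show ?thesis .
qed

lemma main_gen:
  fixes \<alpha> :: "nat \<Rightarrow> nat \<Rightarrow> 'a::field_char_0"
  assumes len: "\<And>i. i < l \<Longrightarrow> length (ms i) = N"
    and ind: "lin_indep r (\<lambda>j w. \<Sum>i<l. \<alpha> j i * Pn (ms i) w)"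
  shows "\<exists>s0. \<forall>s\<ge>s0. lin_indep r (\<lambda>j w. \<Sum>i<l. \<alpha> j i * Pn (ms i @ replicate s [c]) w)"
proof -
  define F where "F j s w = (\<Sum>i<l. \<alpha> j i * Pn (ms i @ replicate s [c]) w)" for j s w
  define G where "G j s w = (\<Sum>i<l. \<alpha> j i * (\<Sum>E1\<in>Pow (ctags c (ms i)). of_nat (s choose card E1) *
      (Pn (dele E1 (ms i) @ replicate (card E1) [c]) w / of_nat (fact (N + card E1)))))" for j s w
  have fne: "(of_nat (fact n) :: 'a) \<noteq> 0" for n by simp
  have LF: "Lam c s w (F j s) = of_nat (fact (N + s)) * G j s w" for j s w
  proof -
    have "Lam c s w (F j s) = (\<Sum>i<l. \<alpha> j i * Lam c s w (Pn (ms i @ replicate s [c])))"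
      unfolding F_def by (rule Lam_lin)
    also have "\<dots> = (\<Sum>i<l. \<alpha> j i * (\<Sum>E1\<in>Pow (ctags c (ms i)). of_nat (s choose card E1) *
        ((of_nat (fact (N + s)) :: 'a) * Pn (dele E1 (ms i) @ replicate (card E1) [c]) w / of_nat (fact (N + card E1)))))"
      by (intro sum.cong refl arg_cong2[where f = "(*)"] Lam_key len) simp
    also have "\<dots> = of_nat (fact (N + s)) * G j s w"
      unfolding G_def by (simp add: sum_distrib_left algebra_simps)
    finally show ?thesis .
  qed
  have G0: "G j 0 w = F j 0 w / of_nat (fact N)" for j w
  proof -
    have "F j 0 w = Lam c 0 w (F j 0)" by (simp add: Lam_0)
    also have "\<dots> = of_nat (fact N) * G j 0 w" by (simp add: LF)
    finally show ?thesis using fne[of N] by (simp add: field_simps)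
  qed
  have F0: "F j 0 w = (\<Sum>i<l. \<alpha> j i * Pn (ms i) w)" for j w by (simp add: F_def)
  have pf: "polyfam (G j)" for j
    unfolding G_def
    by (intro polyfam_sum polyfam_mult polyfam_const polyfam_choose)
  have i0: "lin_indep r (\<lambda>j. G j 0)"
    unfolding lin_indep_def
  proof (rule allI, rule impI)
    fix cc assume h: "(\<lambda>w. \<Sum>j<r. cc j * G j 0 w) = (\<lambda>w. 0)"
    have "(\<lambda>w. \<Sum>j<r. cc j * (\<Sum>i<l. \<alpha> j i * Pn (ms i) w)) = (\<lambda>w. 0)"
    proof
      fix w
      have "(\<Sum>j<r. cc j * G j 0 w) = 0" using h by (simp add: fun_eq_iff)
      then have "(\<Sum>j<r. cc j * F j 0 w) / of_nat (fact N) = 0"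
        by (simp add: G0 sum_divide_distrib)
      then show "(\<Sum>j<r. cc j * (\<Sum>i<l. \<alpha> j i * Pn (ms i) w)) = 0"
        using fne[of N] by (simp add: F0)
    qed
    then show "\<forall>j<r. cc j = 0" using ind unfolding lin_indep_def by blast
  qed
  obtain s0 where s0: "\<forall>s\<ge>s0. lin_indep r (\<lambda>j. G j s)"
    using polyfam_indep[of r G, OF pf i0] by blast
  show ?thesis
  proof (intro exI[of _ s0] allI impI)
    fix s assume "s0 \<le> s"
    then have li: "lin_indep r (\<lambda>j. G j s)" using s0 by blast
    show "lin_indep r (\<lambda>j w. \<Sum>i<l. \<alpha> j i * Pn (ms i @ replicate s [c]) w)"
      unfolding lin_indep_def
    proof (rule allI, rule impI)
      fix cc assume h: "(\<lambda>w. \<Sum>j<r. cc j * (\<Sum>i<l. \<alpha> j i * Pn (ms i @ replicate s [c]) w)) = (\<lambda>w. 0)"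
      then have h': "(\<lambda>v. \<Sum>j<r. cc j * F j s v) = (\<lambda>v. 0)" unfolding F_def .
      have "(\<lambda>w. \<Sum>j<r. cc j * G j s w) = (\<lambda>w. 0)"
      proof
        fix w
        have "of_nat (fact (N + s)) * (\<Sum>j<r. cc j * G j s w) = (\<Sum>j<r. cc j * Lam c s w (F j s))"
          by (simp add: LF sum_distrib_left algebra_simps)
        also have "\<dots> = Lam c s w (\<lambda>v. \<Sum>j<r. cc j * F j s v)"
          by (rule Lam_lin[symmetric])
        also have "\<dots> = 0" unfolding h' by (simp add: Lam_def)
        finally show "(\<Sum>j<r. cc j * G j s w) = 0" using fne[of "N + s"] by simp
      qed
      then show "\<forall>j<r. cc j = 0" using li unfolding lin_indep_def by blast
    qed
  qed
qed

theorem lemma4p18: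
  fixes K :: nat and \<mu> :: "nat list"
  assumes "is_partition \<mu> (4 * K)"
  shows "\<exists>M \<ge> 3 * K. \<forall>N \<ge> M. \<forall>T Os (\<alpha> :: nat \<Rightarrow> nat \<Rightarrow> 'a::field_char_0) r.
     standard_tableau T (shape_shift (N - 3 * K) \<mu>) \<and>
     set Os \<subseteq> ordered_partitions N (N + K) \<and>
     lin_indep r (\<lambda>j w. \<Sum>i<length Os. \<alpha> j i * Pn (map (subw T) (Os ! i)) w)
     \<longrightarrow> (\<exists>s0. \<forall>s \<ge> s0. lin_indep r
            (\<lambda>j w. \<Sum>i<length Os. \<alpha> j i * Pn (map (subw T) (Os ! i) @ replicate s [1]) w))"
proof -
  have key: "\<exists>s0. \<forall>s \<ge> s0. lin_indep r
            (\<lambda>j w. \<Sum>i<length Os. \<alpha> j i * Pn (map (subw T) (Os ! i) @ replicate s [1]) w)"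
    if h: "standard_tableau T (shape_shift (N - 3 * K) \<mu>) \<and>
     set Os \<subseteq> ordered_partitions N (N + K) \<and>
     lin_indep r (\<lambda>j w. \<Sum>i<length Os. \<alpha> j i * Pn (map (subw T) (Os ! i)) w)"
    for N T Os r and \<alpha> :: "nat \<Rightarrow> nat \<Rightarrow> 'a"
  proof -
    have len: "length (map (subw T) (Os ! i)) = N" if "i < length Os" for i
    proof -
      have "Os ! i \<in> ordered_partitions N (N + K)" using h that nth_mem by blast
      then show ?thesis by (simp add: ordered_partitions_def)
    qed
    have li: "lin_indep r (\<lambda>j w. \<Sum>i<length Os. \<alpha> j i * Pn (map (subw T) (Os ! i)) w)"
      using h by blast
    show ?thesis by (rule main_gen[where ms = "\<lambda>i. map (subw T) (Os ! i)", OF len li])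
  qed
  show ?thesis
    by (rule exI[of _ "3 * K"]) (use key in blast)
qed

end
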